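(* Let $\gamma_{-1},\gamma_0,\gamma_1\in\mathbb{C}$ satisfy $\gamma_{-1}+\gamma_0+\gamma_1=0$ and $\gamma_1-\gamma_{-1}=1$, and for $\varepsilon>0$ let $\Box_\varepsilon$ be the operator with coefficients $c_\ell=\gamma_\ell/\varepsilon$, $\ell\in\{-1,0,1\}$. For real $p,q$ with $pq<0$ and $\varepsilon>0$ let \[ D_{\varepsilon}(\lambda)=p\,c_{-1}c_1(\lambda^4+1)+p\,c_0(c_{-1}+c_1)(\lambda^3+\lambda)+\big(q+p(c_{-1}^2+c_0^2+c_1^2)\big)\lambda^2 \] be the characteristic polynomial of the recurrence $p c_{-1}c_1[x(t-2\varepsilon)+x(t+2\varepsilon)]+p c_0(c_{-1}+c_1)[x(t-\varepsilon)+x(t+\varepsilon)]+(q+p(c_{-1}^2+c_0^2+c_1^2))x(t)=0$ (the discrete Euler–Lagrange equation of $\mathcal L=\frac12p\dot x^2+\frac12qx^2$ on the safety interval). The following are equivalent: (a) for all real $p,q$ with $pq<0$ there is $\varepsilon_0>0$ such that for all $\varepsilon\in(0,\varepsilon_0)$ every root of $D_\varepsilon$ has modulus $1$; (b) there exists $k\in\mathbb{R}$ with $\Box_\varepsilon=\Box_\varepsilon^{[\frac12,\frac12]}+ik\,\Box_\varepsilon^{[1,-1]}$, i.e. $(\gamma_{-1},\gamma_0,\gamma_1)=(-\tfrac12+ik,\,-2ik,\,\tfrac12+ik)$.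
   Context: Fix $[a,b]$ and $\varepsilon>0$; $\chi_\ell$ is the indicator function of $[\max(a,a+\ell\varepsilon),\min(b,b+\ell\varepsilon)]$. For $N=1$ and coefficients $c_{-1},c_0,c_1$, $\Box_\varepsilon x(t)=c_{-1}x(t-\varepsilon)\chi_1(t)+c_0x(t)+c_1x(t+\varepsilon)\chi_{-1}(t)$. For $r,s\in\mathbb{C}$, $\Box^{[r,s]}_\varepsilon x(t)=-\chi_{1}(t)\frac{s}{\varepsilon}x(t-\varepsilon)+\frac{s-r}{\varepsilon}x(t)+\chi_{-1}(t)\frac{r}{\varepsilon}x(t+\varepsilon)$; thus $\Box^{[1/2,1/2]}_\varepsilon$ has coefficients $(\gamma_{-1},\gamma_0,\gamma_1)=(-\frac12,0,\frac12)$ and $\Box^{[1,-1]}_\varepsilon$ has $(1,-2,1)$ (in units of $1/\varepsilon$). The conditions $\gamma_{-1}+\gamma_0+\gamma_1=0$, $\gamma_1-\gamma_{-1}=1$ express that $\Box_\varepsilon 1=0$ and $\Box_\varepsilon t=1$ on the safety interval $[a+2\varepsilon,b-2\varepsilon]$. *)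

theory Defs
  imports Complex_Main "HOL-Computational_Algebra.Polynomial"
begin

definition box_coeff :: "complex \<Rightarrow> real \<Rightarrow> complex" where
  "box_coeff g eps = g / complex_of_real eps"

definition char_poly :: "real \<Rightarrow> real \<Rightarrow> complex \<Rightarrow> complex \<Rightarrow> complex \<Rightarrow> complex poly" where
  "char_poly p q cm c0 c1 =
     (let A = complex_of_real p * cm * c1;
          B = complex_of_real p * c0 * (cm + c1);
          C = complex_of_real q + complex_of_real p * (cm\<^sup>2 + c0\<^sup>2 + c1\<^sup>2)
      in [:A, B, C, B, A:])"

definition D_eps :: "complex \<Rightarrow> complex \<Rightarrow> complex \<Rightarrow> real \<Rightarrow> real \<Rightarrow> real \<Rightarrow> complex poly" where
  "D_eps gm g0 g1 p q eps =
     char_poly p q (box_coeff gm eps) (box_coeff g0 eps) (box_coeff g1 eps)"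

end

theory Submission
  imports Defs
begin


lemma poly_D:
  fixes gm g0 g1 :: complex
  assumes "gm + g0 + g1 = 0" "g1 - gm = 1" "eps > 0" "p \<noteq> 0"
  shows "poly (D_eps gm g0 g1 p q eps) z = of_real (p/eps^2) *
     ((gm+1/2)^2*(z-1)^4 - (z^2-1)^2/4 + of_real (q*eps^2/p) * z^2)"
proof -
  have g1: "g1 = gm + 1" using assms by (simp add: algebra_simps)
  have g0: "g0 = -2*gm - 1" using assms(1) g1 by (simp add: algebra_simps) (metis add.commute add_eq_0_iff minus_add_distrib mult_2 add.assoc)
  have e: "complex_of_real eps \<noteq> 0" using assms by simp
  show ?thesis unfolding D_eps_def char_poly_def box_coeff_def Let_def g1 g0
    using e assms(4) by (simp add: field_simps power2_eq_square power4_eq_xxxx)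
qed
lemma Qid: fixes z b :: complex assumes "z \<noteq> 0"
  shows "b*(z-1)^4 - (z^2-1)^2/4 + of_real t * z^2 = z^2 * (b*((z+1/z)-2)^2 - ((z+1/z)^2-4)/4 + of_real t)"
  using assms by (simp add: field_simps power2_eq_square power4_eq_xxxx)


lemma L_unit:
  fixes z :: complex
  assumes z: "z \<noteq> 0" and im: "Im (z + 1/z) = 0" and re: "\<bar>Re (z + 1/z)\<bar> \<le> 2"
  shows "cmod z = 1"
proof -
  obtain x y where xy: "z = Complex x y" by (cases z)
  have n: "x^2 + y^2 \<noteq> 0" using z xy by (simp add: complex_eq_iff)
  have im2: "y - y/(x^2+y^2) = 0" using im xy by (simp add: Im_divide power2_eq_square)
  have re2: "\<bar>x + x/(x^2+y^2)\<bar> \<le> 2" using re xy by (simp add: Re_divide power2_eq_square)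
  show ?thesis
  proof (cases "y = 0")
    case True
    then have x0: "x \<noteq> 0" using n by simp
    have "\<bar>x + 1/x\<bar> \<le> 2" using re2 True x0 by (simp add: power2_eq_square)
    then have "\<bar>x\<bar> = 1"
    proof -
      assume h: "\<bar>x + 1/x\<bar> \<le> 2"
      have e: "x + 1/x = (x^2+1)/x" using x0 by (simp add: field_simps power2_eq_square)
      have "\<bar>x + 1/x\<bar> = (x^2+1)/\<bar>x\<bar>" unfolding e abs_divide by simp
      then have "x^2 + 1 \<le> 2*\<bar>x\<bar>" using h x0 by (simp add: divide_le_eq)
      then have "(\<bar>x\<bar> - 1)^2 \<le> 0" by (simp add: power2_eq_square algebra_simps abs_mult_self_eq)
      then show ?thesis by simp
    qed
    then show ?thesis using xy True by (simp add: cmod_def)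
  next
    case False
    have "y*(x^2+y^2-1) = (y - y/(x^2+y^2))*(x^2+y^2)" using n by (simp add: field_simps)
    also have "\<dots> = 0" using im2 by simp
    finally have "x^2 + y^2 = 1" using False by simp
    then show ?thesis using xy by (simp add: cmod_def)
  qed
qed

lemma L_conv:
  fixes z :: complex
  assumes "cmod z = 1"
  shows "Im (z + 1/z) = 0 \<and> \<bar>Re (z + 1/z)\<bar> \<le> 2"
proof -
  have "z * cnj z = 1" using assms by (metis assms complex_norm_square mult.commute of_real_1 one_power2)
  then have "1/z = cnj z" by (metis divide_eq_eq mult.commute mult_zero_left zero_neq_one)
  moreover have "\<bar>Re z\<bar> \<le> 1" using abs_Re_le_cmod[of z] assms by simp
  ultimately show ?thesis by simp
qed

lemma L_ex: "\<exists>z::complex. z \<noteq> 0 \<and> z + 1/z = w"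
proof -
  define r where "r = csqrt (w^2 - 4)"
  have r2: "r^2 = w^2 - 4" unfolding r_def by simp
  define z where "z = (w + r)/2"
  define z' where "z' = (w - r)/2"
  have "z * z' = 1" unfolding z_def z'_def using r2
    by (simp add: field_simps power2_eq_square)
  then have zn: "z \<noteq> 0" by auto
  have "1/z = z'" using zn \<open>z * z' = 1\<close> by (simp add: field_simps)
  have "z + z' = w" by (simp add: z_def z'_def field_simps)
  then show ?thesis using zn \<open>1/z = z'\<close> by (intro exI[of _ z]) simp
qed

lemma quad:
  fixes L B C r w :: complex
  assumes "L \<noteq> 0" "r^2 = B^2 - 4*L*C" "w = (-B + r)/(2*L)"
  shows "L*w^2 + B*w + C = 0"
proof -
  have r: "r = B + 2*L*w" using assms by (simp add: field_simps)
  have "4*L*(L*w^2+B*w+C) = r^2 - B^2 + 4*L*C" by (simp add: r power2_eq_square algebra_simps)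
  also have "\<dots> = 0" using assms(2) by simp
  finally show ?thesis using assms(1) by simp
qed


definition Qc :: "complex \<Rightarrow> real \<Rightarrow> complex \<Rightarrow> complex" where
  "Qc b t w = b*(w-2)^2 - (w^2-4)/4 + of_real t"

lemma Qc_expand: "Qc b t w = (b-1/4)*w^2 + (-4*b)*w + (4*b+1+of_real t)"
  unfolding Qc_def by (simp add: power2_eq_square field_simps)

lemma root_D:
  fixes gm g0 g1 :: complex
  assumes "gm + g0 + g1 = 0" "g1 - gm = 1" "eps > 0" "p \<noteq> 0" "z \<noteq> 0"
  shows "poly (D_eps gm g0 g1 p q eps) z = of_real (p/eps^2) * z^2 * Qc ((gm+1/2)^2) (q*eps^2/p) (z+1/z)"
  unfolding poly_D[OF assms(1-4)] Qid[OF assms(5)] Qc_def by simp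

lemma bad_root:
  fixes gm g0 g1 :: complex
  assumes "gm + g0 + g1 = 0" "g1 - gm = 1" "eps > 0" "p \<noteq> 0"
    and "Qc ((gm+1/2)^2) (q*eps^2/p) w = 0" "\<not> (Im w = 0 \<and> \<bar>Re w\<bar> \<le> 2)"
  shows "\<exists>z. poly (D_eps gm g0 g1 p q eps) z = 0 \<and> cmod z \<noteq> 1"
proof -
  obtain z where z: "z \<noteq> 0" "z + 1/z = w" using L_ex by blast
  have "poly (D_eps gm g0 g1 p q eps) z = 0" using root_D[OF assms(1-4) z(1)] z assms(5) by simp
  moreover have "cmod z \<noteq> 1" using L_conv[of z] z assms(6) by auto
  ultimately show ?thesis by blast
qed


theorem mainTheorem3:
  fixes gm g0 g1 :: complex
  assumes "gm + g0 + g1 = 0"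
    and "g1 - gm = 1"
  shows "(\<forall>p q :: real. p * q < 0 \<longrightarrow>
            (\<exists>eps0 > 0. \<forall>eps. 0 < eps \<and> eps < eps0 \<longrightarrow>
               (\<forall>z. poly (D_eps gm g0 g1 p q eps) z = 0 \<longrightarrow> cmod z = 1)))
         \<longleftrightarrow>
         (\<exists>k :: real. gm = - 1/2 + \<i> * of_real k \<and> g0 = - 2 * \<i> * of_real k
                     \<and> g1 = 1/2 + \<i> * of_real k)"
proof -
  have g1: "g1 = gm + 1" using assms by (simp add: algebra_simps)
  have g0: "g0 = -2*gm - 1" using assms(1) g1 by (simp add: algebra_simps) (metis add.commute add_eq_0_iff minus_add_distrib mult_2 add.assoc)
  define a where "a = gm + 1/2"
  define b where "b = a^2"
  show ?thesis
  proof
    assume A: "\<forall>p q :: real. p * q < 0 \<longrightarrow>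
            (\<exists>eps0 > 0. \<forall>eps. 0 < eps \<and> eps < eps0 \<longrightarrow>
               (\<forall>z. poly (D_eps gm g0 g1 p q eps) z = 0 \<longrightarrow> cmod z = 1))"
    have "Re a = 0"
    proof (rule ccontr)
      assume ra: "Re a \<noteq> 0"
      obtain eps0 where e0: "eps0 > 0" and H: "\<forall>eps. 0 < eps \<and> eps < eps0 \<longrightarrow>
               (\<forall>z. poly (D_eps gm g0 g1 1 (-1) eps) z = 0 \<longrightarrow> cmod z = 1)"
        using A[rule_format, of 1 "-1"] by auto
      have noBad: "Im w = 0 \<and> \<bar>Re w\<bar> \<le> 2"
        if ep: "0 < eps" "eps < eps0" and qw: "Qc b (-(eps^2)) w = 0" for eps w
      proof (rule ccontr)
        assume nb: "\<not> (Im w = 0 \<and> \<bar>Re w\<bar> \<le> 2)"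
        have "Qc ((gm+1/2)^2) ((-1)*eps^2/1) w = 0" using qw by (simp add: b_def a_def)
        from bad_root[OF assms(1,2) ep(1) _ this nb] obtain z where
          "poly (D_eps gm g0 g1 1 (-1) eps) z = 0" "cmod z \<noteq> 1" by auto
        then show False using H ep by auto
      qed
      show False
      proof (cases "b = 1/4")
        case True
        define eps where "eps = eps0/2"
        have ep: "0 < eps" "eps < eps0" using e0 by (auto simp: eps_def)
        have "poly (D_eps gm g0 g1 1 (-1) eps) 0 = 0"
          using poly_D[OF assms(1,2) ep(1), of 1 "-1" 0] True by (simp add: b_def a_def)
        then have "cmod (0::complex) = 1" using H ep by blast
        then show False by simp
      next
        case bq: False
        show False
        proof (cases "Im b = 0")
          case False
          define eps where "eps = eps0/2"
          have ep: "0 < eps" "eps < eps0" using e0 by (auto simp: eps_def)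
          define L where "L = b - 1/4"
          define B where "B = -4*b"
          define C where "C = 4*b+1+complex_of_real (-(eps^2))"
          define r where "r = csqrt (B^2 - 4*L*C)"
          have L0: "L \<noteq> 0" using bq by (simp add: L_def)
          define w1 where "w1 = (-B+r)/(2*L)"
          define w2 where "w2 = (-B+(-r))/(2*L)"
          have "L*w1^2 + B*w1 + C = 0" by (rule quad[OF L0 _ w1_def]) (simp add: r_def)
          then have q1: "Qc b (-(eps^2)) w1 = 0" by (simp add: Qc_expand L_def B_def C_def)
          have "L*w2^2 + B*w2 + C = 0" by (rule quad[OF L0 _ w2_def]) (simp add: r_def)
          then have q2: "Qc b (-(eps^2)) w2 = 0" by (simp add: Qc_expand L_def B_def C_def)
          have i1: "Im w1 = 0" using noBad[OF ep q1] by simp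
          have i2: "Im w2 = 0" using noBad[OF ep q2] by simp
          define X where "X = w1 + w2"
          have XL: "X * L = 4*b" using L0 unfolding X_def w1_def w2_def B_def
            by (simp add: field_simps)
          have iX: "Im X = 0" using i1 i2 by (simp add: X_def)
          have "Im (X*L) = Re X * Im b" using iX by (simp add: L_def)
          then have "Re X * Im b = 4 * Im b" using XL by simp
          then have rX: "Re X = 4" using False by simp
          have "Re (X*L) = Re X * (Re b - 1/4)" using iX by (simp add: L_def)
          then have "4 * (Re b - 1/4) = 4 * Re b" using XL rX by simp
          then show False by simp
        next
          case True
          have "Im b = 2 * Re a * Im a" by (simp add: b_def power2_eq_square)
          then have ia: "Im a = 0" using True ra by simp
          define \<beta> where "\<beta> = Re b"
          have bb: "b = of_real \<beta>" using True by (simp add: \<beta>_def complex_eq_iff)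
          have bpos: "\<beta> > 0" using ra ia by (simp add: \<beta>_def b_def power2_eq_square) (meson not_real_square_gt_zero)
          have b14: "\<beta> \<noteq> 1/4"
          proof
            assume "\<beta> = 1/4"
            then have "b = 1/4" using bb by (simp add: complex_eq_iff)
            then show False using bq by simp
          qed
          define eps where "eps = min (eps0/2) (sqrt \<beta>)"
          have ep: "0 < eps" "eps < eps0" using e0 bpos by (auto simp: eps_def)
          define s where "s = eps^2"
          have s0: "s > 0" using ep by (simp add: s_def)
          have sb: "s \<le> \<beta>"
          proof -
            have "eps \<le> sqrt \<beta>" by (simp add: eps_def)
            then have "eps^2 \<le> (sqrt \<beta>)^2" using ep by (intro power_mono) auto
            then show ?thesis using bpos by (simp add: s_def)
          qed
          define d where "d = 1 + s*(4*\<beta>-1)"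
          have dpos: "d > 0"
          proof (cases "\<beta> > 1/4")
            case True
            then have "s*(4*\<beta>-1) > 0" using s0 by (intro mult_pos_pos) auto
            then show ?thesis by (simp add: d_def)
          next
            case False
            have "s*(1-4*\<beta>) \<le> \<beta>*1" using sb bpos False s0 by (intro mult_mono) auto
            then show ?thesis using False bpos by (simp add: d_def algebra_simps)
          qed
          define w where "w = (4*\<beta> + sqrt d)/(2*(\<beta>-1/4))"
          have L0: "complex_of_real (\<beta>-1/4) \<noteq> 0" unfolding of_real_eq_0_iff using b14 by simp
          have "of_real (\<beta>-1/4) * (of_real w)^2 + (-4*of_real \<beta>) * of_real w
                 + (4*of_real \<beta>+1+complex_of_real (-s)) = 0"
          proof (rule quad[OF L0, where r = "of_real (sqrt d)"])
            have "(sqrt d)^2 = (-4*\<beta>)^2 - 4*(\<beta>-1/4)*(4*\<beta>+1+(-s))"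
              using dpos by (simp add: d_def power2_eq_square algebra_simps)
            then have "complex_of_real ((sqrt d)^2) = of_real ((-4*\<beta>)^2 - 4*(\<beta>-1/4)*(4*\<beta>+1+(-s)))"
              by simp
            then show "(complex_of_real (sqrt d))\<^sup>2 = (- 4 * complex_of_real \<beta>)\<^sup>2 -
                 4 * complex_of_real (\<beta> - 1 / 4) * (4 * complex_of_real \<beta> + 1 + complex_of_real (- s))"
              by simp
            show "complex_of_real w = (- (- 4 * complex_of_real \<beta>) + complex_of_real (sqrt d)) /
                 (2 * complex_of_real (\<beta> - 1 / 4))" by (simp add: w_def)
          qed
          then have qw: "Qc b (-(eps^2)) (of_real w) = 0" by (simp add: Qc_expand bb s_def)
          have "\<bar>w\<bar> > 2"
          proof (cases "\<beta> > 1/4")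
            case True
            have "4*(\<beta>-1/4) < 4*\<beta> + sqrt d" proof -
              have h: "sqrt d > 0" using dpos by simp
              have e: "4*(\<beta>-1/4) = 4*\<beta> - 1" by (simp add: algebra_simps)
              show ?thesis unfolding e using h by linarith
            qed
            then have "w > 2" using True by (simp add: w_def field_simps)
            then show ?thesis by simp
          next
            case False
            then have bl: "\<beta> < 1/4" using b14 by simp
            have "sqrt d > 1 - 8*\<beta>"
            proof (cases "1 - 8*\<beta> < 0")
              case True then show ?thesis by (smt (verit) real_sqrt_ge_zero dpos)
            next
              case False
              have "(1-8*\<beta>)^2 < d"
              proof -
                have "s*(1-4*\<beta>) < (16*\<beta>)*(1-4*\<beta>)" using sb bpos bl
                  by (intro mult_strict_right_mono) auto
                then show ?thesis by (simp add: d_def power2_eq_square algebra_simps)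
              qed
              then show ?thesis using False by (simp add: real_less_rsqrt)
            qed
            then have "4*\<beta> + sqrt d > -4*(\<beta>-1/4)" by simp
            then have "w < -2" using bl by (simp add: w_def field_simps)
            then show ?thesis by simp
          qed
          then show False using noBad[OF ep qw] by simp
        qed
      qed
    qed
    then show "\<exists>k :: real. gm = - 1/2 + \<i> * of_real k \<and> g0 = - 2 * \<i> * of_real k
                     \<and> g1 = 1/2 + \<i> * of_real k"
      by (intro exI[of _ "Im a"]) (simp add: g0 g1 a_def complex_eq_iff)
  next
    assume "\<exists>k :: real. gm = - 1/2 + \<i> * of_real k \<and> g0 = - 2 * \<i> * of_real k
                     \<and> g1 = 1/2 + \<i> * of_real k"
    then obtain k :: real where gk: "gm = - 1/2 + \<i> * of_real k" by blast
    define m where "m = k^2"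
    have m0: "m \<ge> 0" by (simp add: m_def)
    have bm: "(gm+1/2)^2 = - of_real m" by (simp add: gk m_def power2_eq_square complex_eq_iff)
    show "\<forall>p q :: real. p * q < 0 \<longrightarrow>
            (\<exists>eps0 > 0. \<forall>eps. 0 < eps \<and> eps < eps0 \<longrightarrow>
               (\<forall>z. poly (D_eps gm g0 g1 p q eps) z = 0 \<longrightarrow> cmod z = 1))"
    proof (intro allI impI)
      fix p q :: real assume pq: "p * q < 0"
      have p0: "p \<noteq> 0" using pq by auto
      define c where "c = -q/p"
      have c0: "c > 0" using pq unfolding c_def
        by (cases "p > 0") (auto simp: divide_pos_pos field_simps mult_less_0_iff)
      define L where "L = 4*m+1"
      have L0: "L > 0" using m0 by (simp add: L_def)
      define eps0 where "eps0 = sqrt (1/(c*L))"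
      have e0: "eps0 > 0" using c0 L0 by (simp add: eps0_def)
      show "\<exists>eps0 > 0. \<forall>eps. 0 < eps \<and> eps < eps0 \<longrightarrow>
               (\<forall>z. poly (D_eps gm g0 g1 p q eps) z = 0 \<longrightarrow> cmod z = 1)"
      proof (intro exI[of _ eps0] conjI allI impI e0)
        fix eps z assume ep: "0 < eps \<and> eps < eps0" and pz: "poly (D_eps gm g0 g1 p q eps) z = 0"
        define s where "s = c*eps^2"
        have tq: "q*eps^2/p = -s" by (simp add: s_def c_def)
        have sL: "s*L \<le> 1"
        proof -
          have "eps^2 \<le> eps0^2" using ep by (intro power_mono) auto
          also have "\<dots> = 1/(c*L)" using c0 L0 by (simp add: eps0_def)
          finally have "eps^2 \<le> 1/(c*L)" .
          then show ?thesis using c0 L0 by (simp add: s_def field_simps)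
        qed
        have pe: "complex_of_real (p/eps^2) \<noteq> 0" using p0 ep by simp
        have z0: "z \<noteq> 0"
        proof
          assume "z = 0"
          then have "poly (D_eps gm g0 g1 p q eps) 0 = 0" using pz by simp
          then have "of_real (p/eps^2) * (- of_real m - 1/4 :: complex) = 0"
            using poly_D[OF assms(1,2), of eps p q 0] ep p0 bm by simp
          then have "(- of_real m - 1/4 :: complex) = 0" using pe by simp
          then have "- m - 1/4 = 0"
            by (metis (mono_tags) of_real_1 of_real_diff of_real_divide of_real_minus of_real_numeral of_real_eq_0_iff)
          then show False using m0 by simp
        qed
        define w where "w = z + 1/z"
        have "of_real (p/eps^2) * z^2 * Qc (-of_real m) (-s) w = 0"
          using root_D[OF assms(1,2), of eps p z q] ep p0 z0 pz bm tq by (simp add: w_def)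
        then have qw: "Qc (-of_real m) (-s) w = 0" using pe z0 by simp
        define d where "d = 4*(1 - s*L)"
        have d0: "d \<ge> 0" using sL by (simp add: d_def)
        have "(of_real L * w - 8*of_real m)^2 - of_real d = -4 * of_real L * Qc (-of_real m) (-s) w"
          unfolding Qc_def d_def L_def by (simp add: power2_eq_square field_simps)
        then have "(of_real L * w - 8*of_real m)^2 = (complex_of_real (sqrt d))^2"
          using qw d0 by (simp flip: of_real_power)
        then have "of_real L * w - 8*of_real m = of_real (sqrt d) \<or>
                   of_real L * w - 8*of_real m = - of_real (sqrt d)"
          by (simp add: power2_eq_iff)
        then obtain \<sigma> :: real where sg: "\<sigma> = sqrt d \<or> \<sigma> = - sqrt d"
          and eqs: "of_real L * w - 8*of_real m = of_real \<sigma>" by (metis of_real_minus)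
        have wr: "w = of_real ((8*m + \<sigma>)/L)" using eqs L0 by (simp add: field_simps)
        have sd: "sqrt d \<le> 2"
        proof -
          have "d \<le> 4" using L0 ep c0 by (simp add: d_def s_def)
          then have "sqrt d \<le> sqrt 4" by (rule real_sqrt_le_mono)
          moreover have "sqrt 4 = (2::real)" by (simp add: real_sqrt_unique)
          ultimately show ?thesis by simp
        qed
        have sq0: "sqrt d \<ge> 0" using d0 by simp
        have sb: "\<bar>\<sigma>\<bar> \<le> 2" using sg sd sq0 by linarith
        have "-2*L \<le> 8*m + \<sigma>" "8*m + \<sigma> \<le> 2*L" using sb m0 unfolding L_def by (simp_all add: abs_le_iff)
        then have "\<bar>(8*m + \<sigma>)/L\<bar> \<le> 2"
          using L0 by (auto simp: abs_le_iff divide_le_eq le_divide_eq)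
        then have "Im (z + 1/z) = 0 \<and> \<bar>Re (z + 1/z)\<bar> \<le> 2"
          using wr unfolding w_def by (simp only: Im_complex_of_real Re_complex_of_real)
        then show "cmod z = 1" using L_unit[OF z0] by blast
      qed
    qed
  qed
qed
end
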